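(* Let $f$ be a complex-valued harmonic function in an open set $R\subseteq\mathbb{C}$. If $\mathrm{Val}(f,w)$ is finite for each $w\in\mathbb{C}$, then $\operatorname{int}(f(S)\cup C(f))=\varnothing$.
   Context: Writing $f=u+iv$, $J_f=u_xv_y-u_yv_x$ and $S=\{z\in R: J_f(z)=0\}$. $C(f)$ is the set of finite points $\zeta\in\mathbb{C}$ for which there is a sequence $(z_n)\subset R$ converging to a point of $\partial R$ or with $|z_n|\to\infty$, such that $f(z_n)\to\zeta$. $\mathrm{Val}(f,w)$ is the number of distinct $z\in R$ with $f(z)=w$. *)

theory Defs
  imports "HOL-Analysis.Analysis"
begin

definition dx :: "(complex \<Rightarrow> complex) \<Rightarrow> complex \<Rightarrow> complex" where
  "dx f z = vector_derivative (\<lambda>t::real. f (z + of_real t)) (at 0)"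

definition dy :: "(complex \<Rightarrow> complex) \<Rightarrow> complex \<Rightarrow> complex" where
  "dy f z = vector_derivative (\<lambda>t::real. f (z + \<i> * of_real t)) (at 0)"

definition harmonic_on :: "complex set \<Rightarrow> (complex \<Rightarrow> complex) \<Rightarrow> bool" where
  "harmonic_on R f \<longleftrightarrow> open R \<and>
     (\<forall>z\<in>R. f differentiable (at z)) \<and>
     (\<forall>z\<in>R. dx f differentiable (at z) \<and> dy f differentiable (at z)) \<and>
     continuous_on R (dx (dx f)) \<and> continuous_on R (dy (dx f)) \<and>
     continuous_on R (dx (dy f)) \<and> continuous_on R (dy (dy f)) \<and>
     (\<forall>z\<in>R. dx (dx f) z + dy (dy f) z = 0)"

definition jac :: "(complex \<Rightarrow> complex) \<Rightarrow> complex \<Rightarrow> real" where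
  "jac f z = Re (dx f z) * Im (dy f z) - Re (dy f z) * Im (dx f z)"

definition singset :: "complex set \<Rightarrow> (complex \<Rightarrow> complex) \<Rightarrow> complex set" where
  "singset R f = {z \<in> R. jac f z = 0}"

definition cluster_set :: "complex set \<Rightarrow> (complex \<Rightarrow> complex) \<Rightarrow> complex set" where
  "cluster_set R f = {\<zeta>. \<exists>zs :: nat \<Rightarrow> complex. (\<forall>n. zs n \<in> R) \<and>
      ((\<exists>p\<in>frontier R. zs \<longlonglongrightarrow> p) \<or> filterlim (\<lambda>n. norm (zs n)) at_top sequentially) \<and>
      (\<lambda>n. f (zs n)) \<longlonglongrightarrow> \<zeta>}"

definition Val :: "complex set \<Rightarrow> (complex \<Rightarrow> complex) \<Rightarrow> complex \<Rightarrow> nat" where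
  "Val R f w = card {z \<in> R. f z = w}"

end

theory Submission
  imports Defs
begin

lemma lin_repr:
  assumes "linear L"
  shows "L h = of_real (Re h) * L 1 + of_real (Im h) * L \<i>"
proof -
  have "h = Re h *\<^sub>R 1 + Im h *\<^sub>R \<i>" by (simp add: complex_eq_iff)
  then have "L h = L (Re h *\<^sub>R 1 + Im h *\<^sub>R \<i>)" by simp
  also have "\<dots> = L (Re h *\<^sub>R 1) + L (Im h *\<^sub>R \<i>)"
    by (rule linear_add[OF assms])
  also have "\<dots> = Re h *\<^sub>R L 1 + Im h *\<^sub>R L \<i>"
    by (simp only: linear_scale[OF assms])
  finally show ?thesis by (simp add: scaleR_conv_of_real)
qed

lemma dx_eq:
  assumes "(f has_derivative L) (at z)"
  shows "dx f z = L 1"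
proof -
  have d1: "((\<lambda>t::real. z + of_real t) has_derivative (\<lambda>t. of_real t)) (at 0)"
    by (auto intro!: derivative_eq_intros)
  have "(f has_derivative L) (at (z + of_real 0))" using assms by simp
  from diff_chain_at[OF d1 this]
  have "((\<lambda>t. f (z + of_real t)) has_derivative (\<lambda>t. L (of_real t))) (at 0)"
    by (simp add: o_def)
  moreover have "(\<lambda>t. L (of_real t)) = (\<lambda>t. t *\<^sub>R L 1)"
  proof
    fix t :: real
    have "(of_real t::complex) = t *\<^sub>R 1" by (simp add: scaleR_conv_of_real)
    then show "L (of_real t) = t *\<^sub>R L 1"
      using has_derivative_linear[OF assms] by (simp add: linear_scale)
  qed
  ultimately have "((\<lambda>t. f (z + of_real t)) has_vector_derivative L 1) (at 0)"
    by (simp add: has_vector_derivative_def)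
  then show ?thesis unfolding dx_def by (rule vector_derivative_at)
qed

lemma dy_eq:
  assumes "(f has_derivative L) (at z)"
  shows "dy f z = L \<i>"
proof -
  have d1: "((\<lambda>t::real. z + \<i> * of_real t) has_derivative (\<lambda>t. \<i> * of_real t)) (at 0)"
    by (auto intro!: derivative_eq_intros)
  have "(f has_derivative L) (at (z + \<i> * of_real 0))" using assms by simp
  from diff_chain_at[OF d1 this]
  have "((\<lambda>t. f (z + \<i> * of_real t)) has_derivative (\<lambda>t. L (\<i> * of_real t))) (at 0)"
    by (simp add: o_def)
  moreover have "(\<lambda>t. L (\<i> * of_real t)) = (\<lambda>t. t *\<^sub>R L \<i>)"
  proof
    fix t :: real
    have "\<i> * of_real t = t *\<^sub>R \<i>" by (simp add: scaleR_conv_of_real)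
    then show "L (\<i> * of_real t) = t *\<^sub>R L \<i>"
      using has_derivative_linear[OF assms] by (simp add: linear_scale)
  qed
  ultimately have "((\<lambda>t. f (z + \<i> * of_real t)) has_vector_derivative L \<i>) (at 0)"
    by (simp add: has_vector_derivative_def)
  then show ?thesis unfolding dy_def by (rule vector_derivative_at)
qed

definition Dm :: "(complex \<Rightarrow> complex) \<Rightarrow> complex \<Rightarrow> complex \<Rightarrow> complex" where
  "Dm f z h = of_real (Re h) * dx f z + of_real (Im h) * dy f z"

lemma has_derivative_Dm:
  assumes "f differentiable (at z)"
  shows "(f has_derivative Dm f z) (at z)"
proof -
  obtain L where L: "(f has_derivative L) (at z)" using assms by (auto simp: differentiable_def)
  have "L h = Dm f z h" for h
    using lin_repr[OF has_derivative_linear[OF L], of h] dx_eq[OF L] dy_eq[OF L]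
    by (simp add: Dm_def)
  then have "L = Dm f z" by (rule ext)
  with L show ?thesis by simp
qed

lemma ker_nonzero:
  fixes a b :: complex
  assumes "Re a * Im b - Re b * Im a = 0"
  shows "\<exists>h. h \<noteq> 0 \<and> of_real (Re h) * a + of_real (Im h) * b = 0"
proof (cases "Re a = 0 \<and> Re b = 0")
  case True
  show ?thesis
  proof (cases "Im a = 0 \<and> Im b = 0")
    case True
    with \<open>Re a = 0 \<and> Re b = 0\<close> have "a = 0" "b = 0" by (auto simp: complex_eq_iff)
    then show ?thesis by (intro exI[of _ 1]) auto
  next
    case False
    show ?thesis
      apply (rule exI[of _ "Complex (Im b) (- Im a)"])
      using False True assms by (auto simp: complex_eq_iff algebra_simps)
  qed
next
  case False
  show ?thesis
    apply (rule exI[of _ "Complex (Re b) (- Re a)"])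
    using False assms by (auto simp: complex_eq_iff algebra_simps)
qed

lemma inj_lin2:
  fixes a b :: complex
  assumes "Re a * Im b - Re b * Im a \<noteq> 0"
  shows "inj (\<lambda>h. of_real (Re h) * a + of_real (Im h) * b)"
proof (rule injI)
  fix x y :: complex
  assume "of_real (Re x) * a + of_real (Im x) * b = of_real (Re y) * a + of_real (Im y) * b"
  then have e1: "(Re x - Re y) * Re a + (Im x - Im y) * Re b = 0"
    and e2: "(Re x - Re y) * Im a + (Im x - Im y) * Im b = 0"
    by (auto simp: complex_eq_iff algebra_simps)
  define s where "s = Re x - Re y"
  define t where "t = Im x - Im y"
  have e1': "s * Re a + t * Re b = 0" and e2': "s * Im a + t * Im b = 0"
    using e1 e2 by (auto simp: s_def t_def)
  have "s * (Re a * Im b - Re b * Im a) = 0"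
  proof -
    have "s * (Re a * Im b - Re b * Im a) = (s * Re a + t * Re b) * Im b - (s * Im a + t * Im b) * Re b"
      by (simp add: algebra_simps)
    then show ?thesis using e1' e2' by simp
  qed
  moreover have "t * (Re a * Im b - Re b * Im a) = 0"
  proof -
    have "t * (Re a * Im b - Re b * Im a) = (s * Im a + t * Im b) * Re a - (s * Re a + t * Re b) * Im a"
      by (simp add: algebra_simps)
    then show ?thesis using e1' e2' by simp
  qed
  ultimately have "s = 0" "t = 0" using assms by auto
  then show "x = y" by (auto simp: s_def t_def complex_eq_iff)
qed

lemma not_inj_lin2:
  fixes a b :: complex
  assumes "Re a * Im b - Re b * Im a = 0"
  shows "\<not> inj (\<lambda>h. of_real (Re h) * a + of_real (Im h) * b)"
proof
  assume i: "inj (\<lambda>h. of_real (Re h) * a + of_real (Im h) * b)"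
  obtain h where h0: "h \<noteq> 0" and hk: "of_real (Re h) * a + of_real (Im h) * b = 0"
    using ker_nonzero[OF assms] by blast
  have "(\<lambda>h. of_real (Re h) * a + of_real (Im h) * b) h = (\<lambda>h. of_real (Re h) * a + of_real (Im h) * b) 0"
    using hk by simp
  then have "h = 0" by (rule injD[OF i])
  then show False using h0 by simp
qed

lemma ift_c:
  fixes F :: "complex \<Rightarrow> complex" and F' :: "complex \<Rightarrow> complex \<Rightarrow> complex"
  assumes "open U" and der: "\<And>x. x \<in> U \<Longrightarrow> (F has_derivative F' x) (at x)"
    and c1: "continuous_on U (\<lambda>x. F' x 1)" and c2: "continuous_on U (\<lambda>x. F' x \<i>)"
    and "x0 \<in> U" and inj0: "inj (F' x0)"
  obtains U' V g g' where "open U'" "U' \<subseteq> U" "x0 \<in> U'" "open V" "F x0 \<in> V"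
    "homeomorphism U' V F g"
    "\<And>y. y \<in> V \<Longrightarrow> (g has_derivative g' y) (at y)"
    "\<And>y. y \<in> V \<Longrightarrow> g' y = inv (F' (g y))"
    "\<And>y. y \<in> V \<Longrightarrow> bij (F' (g y))"
proof -
  define DL where "DL x = Blinfun (F' x)" for x
  have bl: "bounded_linear (F' x)" if "x \<in> U" for x
    using der[OF that] by (rule has_derivative_bounded_linear)
  have DLa: "blinfun_apply (DL x) = F' x" if "x \<in> U" for x
    using bl[OF that] by (simp add: DL_def bounded_linear_Blinfun_apply)
  have derf: "(F has_derivative blinfun_apply (DL x)) (at x)" if "x \<in> U" for x
    using der[OF that] DLa[OF that] by simp
  have contf: "continuous_on U DL"
  proof (rule continuous_on_blinfun_componentwise)
    fix i :: complex assume "i \<in> Basis"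
    then have "i = 1 \<or> i = \<i>" by (auto simp: Basis_complex_def)
    then have "continuous_on U (\<lambda>x. F' x i)" using c1 c2 by auto
    then show "continuous_on U (\<lambda>x. blinfun_apply (DL x) i)"
      by (rule continuous_on_eq) (simp add: DLa)
  qed
  have lin0: "linear (F' x0)" using bl[OF \<open>x0 \<in> U\<close>] bounded_linear.linear by blast
  obtain g0 where g0: "linear g0" "g0 \<circ> F' x0 = id"
    using linear_injective_left_inverse[OF lin0 inj0] by blast
  define invf where "invf = Blinfun g0"
  have blg0: "bounded_linear g0" using g0(1) by (simp add: linear_conv_bounded_linear)
  have invf0: "invf o\<^sub>L DL x0 = id_blinfun"
  proof (rule blinfun_eqI)
    fix h
    have "blinfun_apply invf = g0" using blg0 by (simp add: invf_def bounded_linear_Blinfun_apply)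
    moreover have "blinfun_apply (DL x0) = F' x0" using DLa[OF \<open>x0 \<in> U\<close>] .
    moreover have "g0 (F' x0 h) = h" using g0(2) by (metis comp_apply id_apply)
    ultimately show "blinfun_apply (invf o\<^sub>L DL x0) h = blinfun_apply id_blinfun h"
      by simp
  qed
  show ?thesis
  proof (rule inverse_function_theorem[OF \<open>open U\<close> derf contf \<open>x0 \<in> U\<close> invf0])
    fix U' V g g'
    assume r: "open U'" "U' \<subseteq> U" "x0 \<in> U'" "open V" "F x0 \<in> V"
      "homeomorphism U' V F g"
      "\<And>y. y \<in> V \<Longrightarrow> (g has_derivative (g' y)) (at y)"
      "\<And>y. y \<in> V \<Longrightarrow> g' y = inv (blinfun_apply (DL (g y)))"
      "\<And>y. y \<in> V \<Longrightarrow> bij (blinfun_apply (DL (g y)))"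
    have gV: "g ` V = U'" using r(6) by (simp add: homeomorphism_def)
    have gU: "g y \<in> U" if "y \<in> V" for y
      using gV r(2) that by blast
    show ?thesis
    proof (rule that[OF r(1-7)])
      fix y assume "y \<in> V"
      have e: "blinfun_apply (DL (g y)) = F' (g y)" by (rule DLa[OF gU[OF \<open>y \<in> V\<close>]])
      show "g' y = inv (F' (g y))" by (rule r(8)[OF \<open>y \<in> V\<close>, unfolded e])
    next
      fix y assume "y \<in> V"
      have e: "blinfun_apply (DL (g y)) = F' (g y)" by (rule DLa[OF gU[OF \<open>y \<in> V\<close>]])
      show "bij (F' (g y))" by (rule r(9)[OF \<open>y \<in> V\<close>, unfolded e])
    qed
  qed
qed


lemma sard_c:
  fixes f :: "complex \<Rightarrow> complex" and D :: "complex \<Rightarrow> complex \<Rightarrow> complex"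
  assumes der: "\<And>x. x \<in> T \<Longrightarrow> (f has_derivative D x) (at x)"
    and ni: "\<And>x. x \<in> T \<Longrightarrow> \<not> inj (D x)"
  shows "negligible (f ` T)"
proof -
  define \<phi> :: "complex \<Rightarrow> real^2" where "\<phi> z = (\<chi> i. if i = 1 then Re z else Im z)" for z
  define \<psi> :: "real^2 \<Rightarrow> complex" where "\<psi> x = Complex (x$1) (x$2)" for x
  have psiphi[simp]: "\<psi> (\<phi> z) = z" for z
    by (simp add: \<phi>_def \<psi>_def complex_eq_iff)
  have phipsi[simp]: "\<phi> (\<psi> x) = x" for x
    by (simp add: \<phi>_def \<psi>_def vec_eq_iff forall_2)
  have lphi: "linear \<phi>"
    by (rule linearI) (simp_all add: \<phi>_def vec_eq_iff)
  have lpsi: "linear \<psi>"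
    by (rule linearI) (simp_all add: \<psi>_def complex_eq_iff)
  define F where "F = \<phi> \<circ> f \<circ> \<psi>"
  define F' where "F' x = \<phi> \<circ> D (\<psi> x) \<circ> \<psi>" for x
  define T' where "T' = \<phi> ` T"
  have derF: "(F has_derivative F' x) (at x within T')" if "x \<in> T'" for x
  proof -
    have xT: "\<psi> x \<in> T" using that by (auto simp: T'_def)
    have d1: "(\<psi> has_derivative \<psi>) (at x)" using lpsi by (rule linear_imp_has_derivative)
    have d2: "(\<phi> has_derivative \<phi>) (at ((f \<circ> \<psi>) x))" using lphi by (rule linear_imp_has_derivative)
    have "((f \<circ> \<psi>) has_derivative (D (\<psi> x) \<circ> \<psi>)) (at x)"
      by (rule diff_chain_at[OF d1 der[OF xT]])
    from diff_chain_at[OF this d2]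
    have "((\<phi> \<circ> (f \<circ> \<psi>)) has_derivative (\<phi> \<circ> (D (\<psi> x) \<circ> \<psi>))) (at x)"
      by (simp add: o_def)
    then show ?thesis
      by (auto simp: F_def F'_def o_assoc intro: has_derivative_at_withinI)
  qed
  have rk: "rank (matrix (F' x)) < CARD(2)" if "x \<in> T'" for x
  proof -
    have lin: "linear (F' x)"
      using derF[OF that] has_derivative_linear by blast
    have xT: "\<psi> x \<in> T" using that by (auto simp: T'_def)
    obtain h1 h2 where h: "h1 \<noteq> h2" "D (\<psi> x) h1 = D (\<psi> x) h2"
      using ni[OF xT] unfolding inj_def by blast
    have "F' x (\<phi> h1) = F' x (\<phi> h2)" "\<phi> h1 \<noteq> \<phi> h2"
      using h by (auto simp: F'_def) (metis psiphi)
    then have "\<not> inj (F' x)" unfolding inj_def by blast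
    then have "\<not> inj ((*v) (matrix (F' x)))"
      using matrix_vector_mul(2)[OF lin] by (metis)
    then show ?thesis by (rule iffD2[OF less_rank_noninjective])
  qed
  have negF: "negligible (F ` T')"
    by (rule baby_Sard[where f' = F']) (use derF rk in auto)
  have eq: "f ` T = \<psi> ` (F ` T')"
    by (auto simp: F_def T'_def image_image)
  show ?thesis
    unfolding eq
    by (rule negligible_differentiable_image_negligible[OF _ negF])
       (simp_all add: linear_imp_differentiable_on[OF lpsi])
qed


lemma alg_dep:
  fixes \<alpha> \<beta> k :: complex
  assumes "Re \<alpha> * Im \<beta> - Re \<beta> * Im \<alpha> = 0" "Re \<alpha> \<noteq> 0 \<or> Re \<beta> \<noteq> 0"
    "Re k * Re \<alpha> + Im k * Re \<beta> = 0"
  shows "Re k * Im \<alpha> + Im k * Im \<beta> = 0"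
proof -
  have "Re \<alpha> * (Re k * Im \<alpha> + Im k * Im \<beta>) = Im \<alpha> * (Re k * Re \<alpha> + Im k * Re \<beta>) + Im k * (Re \<alpha> * Im \<beta> - Re \<beta> * Im \<alpha>)"
    by (simp add: algebra_simps)
  moreover have "Re \<beta> * (Re k * Im \<alpha> + Im k * Im \<beta>) = Im \<beta> * (Re k * Re \<alpha> + Im k * Re \<beta>) - Re k * (Re \<alpha> * Im \<beta> - Re \<beta> * Im \<alpha>)"
    by (simp add: algebra_simps)
  ultimately show ?thesis using assms by auto
qed

lemma jac_scale:
  fixes c A B :: complex
  shows "Re (c * A) * Im (c * B) - Re (c * B) * Im (c * A) = (Re c ^ 2 + Im c ^ 2) * (Re A * Im B - Re B * Im A)"
  by (simp add: algebra_simps power2_eq_square)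

lemma infinite_ball': "r > 0 \<Longrightarrow> infinite (ball (z::complex) r)"
  using open_not_negligible[of "ball z r"] negligible_finite by auto

lemma no_interior_sing:
  fixes f :: "complex \<Rightarrow> complex"
  assumes der: "\<And>z. z \<in> R \<Longrightarrow> (f has_derivative Dm f z) (at z)"
    and cdx: "continuous_on R (dx f)" and cdy: "continuous_on R (dy f)"
    and fin: "\<forall>w. finite {z \<in> R. f z = w}"
    and BR: "ball z1 r \<subseteq> R" and "r > 0" and jac0: "\<forall>z\<in>ball z1 r. jac f z = 0"
  shows False
proof -
  define B where "B = ball z1 r"
  have infB: "infinite B" using infinite_ball' \<open>r > 0\<close> by (simp add: B_def)
  have DmB: "(f has_derivative Dm f z) (at z)" if "z \<in> B" for z
    using der BR that by (auto simp: B_def)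
  have Dm1: "Dm f z 1 = dx f z" and Dmi: "Dm f z \<i> = dy f z" for z
    by (simp_all add: Dm_def)
  show False
  proof (cases "\<forall>z\<in>B. dx f z = 0 \<and> dy f z = 0")
    case True
    have "(f has_derivative (\<lambda>h. 0)) (at z within B)" if "z \<in> B" for z
    proof -
      have "Dm f z = (\<lambda>h. 0)" using True that by (auto simp: Dm_def)
      then show ?thesis using DmB[OF that] by (auto intro: has_derivative_at_withinI)
    qed
    then obtain c where c: "\<forall>x\<in>B. f x = c"
      using has_derivative_zero_constant[of B f] by (auto simp: B_def)
    have "B \<subseteq> {z \<in> R. f z = c}" using c BR by (auto simp: B_def)
    then show False using fin infB finite_subset by blast
  next
    case False
    then obtain z0 where z0: "z0 \<in> B" "dx f z0 \<noteq> 0 \<or> dy f z0 \<noteq> 0" by blast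
    define e where "e = (if dx f z0 \<noteq> 0 then 1 else \<i>)"
    have ane: "Dm f z0 e \<noteq> 0" using z0 by (auto simp: e_def Dm1 Dmi)
    define c where "c = cnj (Dm f z0 e)"
    have cne: "c \<noteq> 0" using ane by (simp add: c_def)
    define L where "L z h = c * Dm f z h" for z h
    define p where "p = Complex (Re (L z0 1)) (Re (L z0 \<i>))"
    have "Re (L z0 e) > 0"
    proof -
      have "Re (L z0 e) = Re (Dm f z0 e)^2 + Im (Dm f z0 e)^2"
        by (simp add: L_def c_def power2_eq_square)
      moreover have "Re (Dm f z0 e) \<noteq> 0 \<or> Im (Dm f z0 e) \<noteq> 0"
        using ane by (simp add: complex_eq_iff)
      ultimately show ?thesis by (simp add: sum_power2_gt_zero_iff)
    qed
    then have pne: "p \<noteq> 0"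
      by (auto simp: p_def e_def complex_eq_iff split: if_splits)
    define q where "q = cnj p"
    have qne: "q \<noteq> 0" using pne by (simp add: q_def)
    define \<Phi> where "\<Phi> z = of_real (Re (c * f z)) + \<i> * of_real (Im (q * z))" for z
    define \<Phi>' where "\<Phi>' z h = of_real (Re (L z h)) + \<i> * of_real (Im (q * h))" for z h
    have Lrep: "L z h = of_real (Re h) * L z 1 + of_real (Im h) * L z \<i>" for z h
      by (simp add: L_def Dm_def algebra_simps)
    have derPhi: "(\<Phi> has_derivative \<Phi>' z) (at z)" if "z \<in> B" for z
      unfolding \<Phi>_def \<Phi>'_def L_def
      by (auto intro!: derivative_eq_intros DmB[OF that])
    have cPhi1: "continuous_on B (\<lambda>z. \<Phi>' z 1)"
    proof -
      have "continuous_on B (dx f)" using cdx BR continuous_on_subset by (auto simp: B_def)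
      then show ?thesis
        unfolding \<Phi>'_def L_def Dm_def by (auto intro!: continuous_intros)
    qed
    have cPhii: "continuous_on B (\<lambda>z. \<Phi>' z \<i>)"
    proof -
      have "continuous_on B (dy f)" using cdy BR continuous_on_subset by (auto simp: B_def)
      then show ?thesis
        unfolding \<Phi>'_def L_def Dm_def by (auto intro!: continuous_intros)
    qed
    have Phi'0: "\<Phi>' z0 h = q * h" for h
    proof -
      have "Re (L z0 h) = Re h * Re p + Im h * Im p"
        by (subst Lrep) (simp add: p_def)
      then show ?thesis
        by (simp add: \<Phi>'_def q_def complex_eq_iff algebra_simps)
    qed
    have inj0: "inj (\<Phi>' z0)"
      using qne by (auto simp: Phi'0 inj_def)
    obtain U' V g g' where r: "open U'" "U' \<subseteq> B" "z0 \<in> U'" "open V" "\<Phi> z0 \<in> V"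
      "homeomorphism U' V \<Phi> g"
      "\<And>y. y \<in> V \<Longrightarrow> (g has_derivative g' y) (at y)"
      "\<And>y. y \<in> V \<Longrightarrow> g' y = inv (\<Phi>' (g y))"
      "\<And>y. y \<in> V \<Longrightarrow> bij (\<Phi>' (g y))"
      by (rule ift_c[of B \<Phi> \<Phi>' z0, OF _ derPhi cPhi1 cPhii z0(1) inj0]) (auto simp: B_def)
    have gV: "g y \<in> U'" "\<Phi> (g y) = y" if "y \<in> V" for y
      using r(6) that unfolding homeomorphism_def by auto
    define w where "w = \<Phi> z0"
    obtain \<eta> where "\<eta> > 0" and eta: "ball w \<eta> \<subseteq> V"
      using r(4,5) by (auto simp: w_def open_contains_ball)
    define I where "I = {-\<eta><..<\<eta>}"
    define y where "y t = w + \<i> * of_real t" for t :: real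
    define \<gamma> where "\<gamma> t = g (y t)" for t
    have yV: "y t \<in> V" if "t \<in> I" for t
    proof -
      have "dist w (y t) < \<eta>" using that by (simp add: y_def I_def dist_norm norm_mult abs_less_iff)
      then show ?thesis using eta by auto
    qed
    have gB: "\<gamma> t \<in> B" if "t \<in> I" for t
      using gV(1)[OF yV[OF that]] r(2) by (auto simp: \<gamma>_def)
    have ure: "Re (c * f (\<gamma> t)) = Re w" if "t \<in> I" for t
    proof -
      have "\<Phi> (\<gamma> t) = y t" using gV(2)[OF yV[OF that]] by (simp add: \<gamma>_def)
      then have "Re (\<Phi> (\<gamma> t)) = Re (y t)" by simp
      then show ?thesis by (simp add: \<Phi>_def y_def)
    qed
    have vder: "((\<lambda>t. Im (c * f (\<gamma> t))) has_derivative (\<lambda>s. 0)) (at t within I)" if "t \<in> I" for t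
    proof -
      define x where "x = \<gamma> t"
      have xB: "x \<in> B" using gB[OF that] by (simp add: x_def)
      have dy: "(y has_derivative (\<lambda>s. \<i> * of_real s)) (at t)"
        unfolding y_def by (auto intro!: derivative_eq_intros)
      have dg: "(\<gamma> has_derivative (\<lambda>s. g' (y t) (\<i> * of_real s))) (at t)"
        using diff_chain_at[OF dy r(7)[OF yV[OF that]]] by (simp add: \<gamma>_def[abs_def] o_def)
      have dv: "((\<lambda>z. Im (c * f z)) has_derivative (\<lambda>k. Im (L x k))) (at (\<gamma> t))"
        unfolding L_def x_def by (auto intro!: derivative_eq_intros DmB[OF gB[OF that]])
      have comp: "((\<lambda>t. Im (c * f (\<gamma> t))) has_derivative (\<lambda>s. Im (L x (g' (y t) (\<i> * of_real s))))) (at t)"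
        using diff_chain_at[OF dg dv] by (simp add: o_def)
      have zero: "Im (L x (g' (y t) (\<i> * of_real s))) = 0" for s
      proof -
        define k where "k = g' (y t) (\<i> * of_real s)"
        have bijx: "bij (\<Phi>' x)" using r(9)[OF yV[OF that]] by (simp add: x_def \<gamma>_def)
        have "k = inv (\<Phi>' x) (\<i> * of_real s)"
          using r(8)[OF yV[OF that]] by (simp add: k_def x_def \<gamma>_def)
        then have "\<Phi>' x k = \<i> * of_real s"
          using bijx by (simp add: bij_is_surj surj_f_inv_f)
        then have reL: "Re (L x k) = 0"
          by (simp add: \<Phi>'_def complex_eq_iff)
        have ReLk: "Re (L x k) = Re k * Re (L x 1) + Im k * Re (L x \<i>)"
          by (subst Lrep) simp
        have ImLk: "Im (L x k) = Re k * Im (L x 1) + Im k * Im (L x \<i>)"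
          by (subst Lrep) simp
        have jx: "jac f x = 0" using jac0 xB by (simp add: B_def)
        have dep: "Re (L x 1) * Im (L x \<i>) - Re (L x \<i>) * Im (L x 1) = 0"
        proof -
          have "Re (L x 1) * Im (L x \<i>) - Re (L x \<i>) * Im (L x 1) = (Re c ^ 2 + Im c ^ 2) * jac f x"
            unfolding L_def Dm1 Dmi jac_def by (rule jac_scale)
          then show ?thesis using jx by simp
        qed
        have nz: "Re (L x 1) \<noteq> 0 \<or> Re (L x \<i>) \<noteq> 0"
        proof (rule ccontr)
          assume "\<not> (Re (L x 1) \<noteq> 0 \<or> Re (L x \<i>) \<noteq> 0)"
          then have "Re (L x h) = 0" for h by (subst Lrep) simp
          then have "Re (\<Phi>' x h) = 0" for h by (simp add: \<Phi>'_def)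
          moreover obtain h where "\<Phi>' x h = 1" using bijx by (metis bij_is_surj surjD)
          ultimately show False by (metis one_complex.sel(1) zero_neq_one)
        qed
        show ?thesis
          unfolding k_def[symmetric] ImLk
          by (rule alg_dep[OF dep nz]) (use reL ReLk in simp)
      qed
      show ?thesis
        using comp zero by (auto intro: has_derivative_at_withinI)
    qed
    have "0 \<in> I" using \<open>\<eta> > 0\<close> by (simp add: I_def)
    obtain cv where cv: "\<forall>t\<in>I. Im (c * f (\<gamma> t)) = cv"
      using has_derivative_zero_constant[of I "\<lambda>t. Im (c * f (\<gamma> t))"] vder
      by (auto simp: I_def)
    have feq: "f (\<gamma> t) = f (\<gamma> 0)" if "t \<in> I" for t
    proof -
      have "c * f (\<gamma> t) = c * f (\<gamma> 0)"
        using ure[OF that] ure[OF \<open>0 \<in> I\<close>] cv that \<open>0 \<in> I\<close> by (simp add: complex_eq_iff)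
      then show ?thesis using cne by simp
    qed
    have injg: "inj_on \<gamma> I"
    proof (rule inj_onI)
      fix s t assume "s \<in> I" "t \<in> I" "\<gamma> s = \<gamma> t"
      then have "\<Phi> (\<gamma> s) = \<Phi> (\<gamma> t)" by simp
      then have "y s = y t" using gV(2)[OF yV[OF \<open>s \<in> I\<close>]] gV(2)[OF yV[OF \<open>t \<in> I\<close>]]
        by (simp add: \<gamma>_def)
      then show "s = t" by (simp add: y_def complex_eq_iff)
    qed
    have "infinite (\<gamma> ` I)"
      using injg \<open>\<eta> > 0\<close> by (simp add: finite_image_iff I_def)
    moreover have "\<gamma> ` I \<subseteq> {z \<in> R. f z = f (\<gamma> 0)}"
      using gB feq BR by (auto simp: B_def)
    ultimately show False using fin finite_subset by blast
  qed
qed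

lemma finite_min_pos:
  assumes "finite P" "\<forall>z\<in>P. E z > (0::real)"
  shows "\<exists>\<epsilon>>0. \<forall>z\<in>P. \<epsilon> \<le> E z"
proof -
  define \<epsilon> where "\<epsilon> = Min (insert 1 (E ` P))"
  have "\<epsilon> > 0" using assms by (simp add: \<epsilon>_def)
  moreover have "\<forall>z\<in>P. \<epsilon> \<le> E z" using assms by (simp add: \<epsilon>_def)
  ultimately show ?thesis by blast
qed

locale hsetup =
  fixes R :: "complex set" and f :: "complex \<Rightarrow> complex"
  assumes openR: "open R"
    and der: "\<And>z. z \<in> R \<Longrightarrow> (f has_derivative Dm f z) (at z)"
    and cdx: "continuous_on R (dx f)" and cdy: "continuous_on R (dy f)"
    and fin: "\<forall>w. finite {z \<in> R. f z = w}"
begin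

definition S where "S = singset R f"

lemma Dm_eq: "Dm f z = (\<lambda>h. of_real (Re h) * dx f z + of_real (Im h) * dy f z)"
  by (simp add: Dm_def fun_eq_iff)

lemma NEG: "negligible (f ` S)"
proof (rule sard_c[where D = "Dm f"])
  fix x assume "x \<in> S"
  then have "x \<in> R" "jac f x = 0" by (auto simp: S_def singset_def)
  then show "(f has_derivative Dm f x) (at x)" using der by blast
  show "\<not> inj (Dm f x)" unfolding Dm_eq
    by (rule not_inj_lin2) (use \<open>jac f x = 0\<close> in \<open>simp add: jac_def\<close>)
qed

lemma REG:
  assumes "z \<in> R" "jac f z \<noteq> 0"
  shows "\<exists>U' V g. open U' \<and> U' \<subseteq> R \<and> z \<in> U' \<and> open V \<and> f z \<in> V \<and> homeomorphism U' V f g"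
proof -
  have c1: "continuous_on R (\<lambda>x. Dm f x 1)" using cdx by (simp add: Dm_def)
  have c2: "continuous_on R (\<lambda>x. Dm f x \<i>)" using cdy by (simp add: Dm_def)
  have inj: "inj (Dm f z)" unfolding Dm_eq
    by (rule inj_lin2) (use assms(2) in \<open>simp add: jac_def\<close>)
  obtain U' V g g' where "open U'" "U' \<subseteq> R" "z \<in> U'" "open V" "f z \<in> V" "homeomorphism U' V f g"
    by (rule ift_c[OF openR der c1 c2 assms(1) inj]) blast+
  then show ?thesis by blast
qed

lemma INT:
  assumes "z \<in> R" "\<delta> > 0"
  shows "\<exists>z'. z' \<in> R \<and> dist z' z < \<delta> \<and> jac f z' \<noteq> 0"
proof (rule ccontr)
  assume H: "\<not> ?thesis"
  obtain d where "d > 0" "ball z d \<subseteq> R" using openR assms(1) open_contains_ball by blast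
  define r where "r = min d \<delta>"
  have "r > 0" using \<open>d > 0\<close> assms(2) by (simp add: r_def)
  have BR: "ball z r \<subseteq> R" using \<open>ball z d \<subseteq> R\<close> by (auto simp: r_def)
  have "\<forall>x\<in>ball z r. jac f x = 0"
    using H BR by (auto simp: r_def dist_commute)
  then show False
    using no_interior_sing[OF der cdx cdy fin BR \<open>r > 0\<close>] by blast
qed

lemma contf: "z \<in> R \<Longrightarrow> continuous (at z) f"
  using der has_derivative_continuous by blast

lemma PERT:
  assumes "z \<in> R" "\<delta> > 0"
  shows "\<exists>z'. z' \<in> R \<and> dist z' z < \<delta> \<and> dist (f z') (f z) < \<delta> \<and> f z' \<notin> f ` S"
proof -
  obtain d where "d > 0" and d: "\<forall>x'. dist x' z < d \<longrightarrow> dist (f x') (f z) < \<delta>"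
    using contf[OF assms(1)] assms(2) unfolding continuous_at_eps_delta by blast
  define r where "r = min d \<delta>"
  have "r > 0" using \<open>d > 0\<close> assms(2) by (simp add: r_def)
  obtain z0 where z0: "z0 \<in> R" "dist z0 z < r" "jac f z0 \<noteq> 0"
    using INT[OF assms(1) \<open>r > 0\<close>] by blast
  obtain U' V g where UV: "open U'" "U' \<subseteq> R" "z0 \<in> U'" "open V" "f z0 \<in> V" "homeomorphism U' V f g"
    using REG[OF z0(1) z0(3)] by blast
  define W where "W = U' \<inter> ball z r"
  have "openin (top_of_set U') W" using UV(1) by (auto simp: W_def intro!: openin_open_Int)
  then have "openin (top_of_set V) (f ` W)" by (rule homeomorphism_imp_open_map[OF UV(6)])
  then have oW: "open (f ` W)" using UV(4) openin_open_trans by blast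
  have "z0 \<in> W" using z0 UV(3) by (auto simp: W_def dist_commute)
  then have "f ` W \<noteq> {}" by blast
  then have "\<not> f ` W \<subseteq> f ` S"
    using NEG negligible_subset open_not_negligible[OF oW] by blast
  then obtain z' where z': "z' \<in> W" "f z' \<notin> f ` S" by blast
  have "z' \<in> R" using z' UV(2) by (auto simp: W_def)
  moreover have "dist z' z < \<delta>" "dist (f z') (f z) < \<delta>"
    using z'(1) d by (auto simp: W_def r_def dist_commute)
  ultimately show ?thesis using z'(2) by blast
qed

lemma SHEETS:
  assumes "w \<notin> f ` S"
  shows "\<exists>\<epsilon>>0. \<exists>G. (\<forall>z\<in>{z \<in> R. f z = w}. continuous_on (ball w \<epsilon>) (G z) \<and>
            (\<forall>y\<in>ball w \<epsilon>. G z y \<in> R \<and> f (G z y) = y)) \<and>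
          (\<forall>z\<in>{z \<in> R. f z = w}. \<forall>z'\<in>{z \<in> R. f z = w}. z \<noteq> z' \<longrightarrow> (\<forall>y\<in>ball w \<epsilon>. G z y \<noteq> G z' y))"
proof -
  define P where "P = {z \<in> R. f z = w}"
  have finP: "finite P" using fin by (simp add: P_def)
  define D2 where "D2 = (\<lambda>(a,b). dist a b / 2) ` {(a,b). a \<in> P \<and> b \<in> P \<and> a \<noteq> b}"
  have "finite {(a,b). a \<in> P \<and> b \<in> P \<and> a \<noteq> b}"
    by (rule finite_subset[of _ "P \<times> P"]) (use finP in auto)
  then have finD2: "finite D2" by (simp add: D2_def)
  define \<rho> where "\<rho> = Min (insert 1 D2)"
  have "\<forall>d\<in>D2. d > 0" by (auto simp: D2_def)
  then have "\<rho> > 0" using finD2 by (simp add: \<rho>_def)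
  have rho_le: "\<rho> \<le> dist a b / 2" if "a \<in> P" "b \<in> P" "a \<noteq> b" for a b
  proof -
    have "dist a b / 2 \<in> D2" using that by (auto simp: D2_def image_iff)
    then show ?thesis unfolding \<rho>_def using finD2 by (intro Min_le) auto
  qed
  define Q where "Q z g \<epsilon> \<longleftrightarrow> continuous_on (ball w \<epsilon>) g \<and>
            (\<forall>y\<in>ball w \<epsilon>. g y \<in> R \<and> f (g y) = y \<and> dist (g y) z < \<rho>)" for z g \<epsilon>
  have Qmono: "Q z g \<epsilon>'" if "Q z g \<epsilon>" "\<epsilon>' \<le> \<epsilon>" for z g \<epsilon> \<epsilon>'
  proof -
    have "ball w \<epsilon>' \<subseteq> ball w \<epsilon>" using that(2) by auto
    then show ?thesis using that(1) unfolding Q_def by (auto intro: continuous_on_subset)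
  qed
  have ex: "\<exists>g. \<exists>\<epsilon>>0. Q z g \<epsilon>" if "z \<in> P" for z
  proof -
    have zR: "z \<in> R" and fz: "f z = w" using that by (auto simp: P_def)
    have "jac f z \<noteq> 0"
      using assms zR fz by (auto simp: S_def singset_def)
    then obtain U' V g where UV: "open U'" "U' \<subseteq> R" "z \<in> U'" "open V" "f z \<in> V" "homeomorphism U' V f g"
      using REG[OF zR] by blast
    have gfz: "g w = z" using UV(6) UV(3) fz unfolding homeomorphism_def by auto
    have cg: "continuous_on V g" using UV(6) unfolding homeomorphism_def by auto
    have "continuous (at w) g"
      using cg UV(4) UV(5) fz continuous_on_eq_continuous_at by blast
    then obtain d where "d > 0" and d: "\<forall>y. dist y w < d \<longrightarrow> dist (g y) (g w) < \<rho>"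
      using \<open>\<rho> > 0\<close> unfolding continuous_at_eps_delta by blast
    obtain e where "e > 0" "ball w e \<subseteq> V" using UV(4,5) fz open_contains_ball by blast
    define \<epsilon> where "\<epsilon> = min d e"
    have "\<epsilon> > 0" using \<open>d > 0\<close> \<open>e > 0\<close> by (simp add: \<epsilon>_def)
    have bV: "ball w \<epsilon> \<subseteq> V" using \<open>ball w e \<subseteq> V\<close> by (auto simp: \<epsilon>_def)
    have gV: "g y \<in> U'" "f (g y) = y" if "y \<in> V" for y
      using UV(6) that unfolding homeomorphism_def by auto
    have "Q z g \<epsilon>"
      unfolding Q_def
    proof (intro conjI ballI)
      show "continuous_on (ball w \<epsilon>) g" using cg bV continuous_on_subset by blast
    next
      fix y assume y: "y \<in> ball w \<epsilon>"
      then have "y \<in> V" using bV by blast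
      then show "g y \<in> R" "f (g y) = y" using gV UV(2) by auto
      show "dist (g y) z < \<rho>" using d y gfz by (auto simp: \<epsilon>_def dist_commute)
    qed
    then show ?thesis using \<open>\<epsilon> > 0\<close> by blast
  qed
  then obtain G where G: "\<forall>z\<in>P. \<exists>\<epsilon>>0. Q z (G z) \<epsilon>" by metis
  then obtain E where E: "\<forall>z\<in>P. E z > 0 \<and> Q z (G z) (E z)" by metis
  obtain \<epsilon> where "\<epsilon> > 0" and eps: "\<forall>z\<in>P. \<epsilon> \<le> E z"
    using finite_min_pos[OF finP] E by blast
  have QP: "Q z (G z) \<epsilon>" if "z \<in> P" for z
    using Qmono E eps that by blast
  have part1: "\<forall>z\<in>P. continuous_on (ball w \<epsilon>) (G z) \<and> (\<forall>y\<in>ball w \<epsilon>. G z y \<in> R \<and> f (G z y) = y)"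
    using QP unfolding Q_def by blast
  have part2: "\<forall>z\<in>P. \<forall>z'\<in>P. z \<noteq> z' \<longrightarrow> (\<forall>y\<in>ball w \<epsilon>. G z y \<noteq> G z' y)"
  proof (intro ballI impI)
    fix z z' y assume zz: "z \<in> P" "z' \<in> P" "z \<noteq> z'" and y: "y \<in> ball w \<epsilon>"
    have "dist (G z y) z < \<rho>" "dist (G z' y) z' < \<rho>"
      using QP[OF zz(1)] QP[OF zz(2)] y unfolding Q_def by auto
    moreover have "\<rho> \<le> dist z z' / 2" using rho_le zz by blast
    ultimately show "G z y \<noteq> G z' y"
      using dist_triangle[of z z' "G z y"] by (auto simp: dist_commute)
  qed
  show ?thesis using part1 part2 \<open>\<epsilon> > 0\<close> unfolding P_def by blast
qed

definition N where "N w = card {z \<in> R. f z = w}"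

lemma MAIN: "interior (f ` S \<union> cluster_set R f) = {}"
proof (rule ccontr)
  define K where "K = f ` S \<union> cluster_set R f"
  assume "interior (f ` S \<union> cluster_set R f) \<noteq> {}"
  then obtain x0 where "x0 \<in> interior K" by (auto simp: K_def)
  then obtain r0 where "r0 > 0" and r0: "ball x0 r0 \<subseteq> K"
    by (meson mem_interior)
  define Sb where "Sb = cball x0 (r0/2)"
  define Fk where "Fk k = {w. N w \<le> k}" for k :: nat
  define \<G> where "\<G> = range (\<lambda>k. Sb - closure (Fk k))"
  have "\<exists>k. \<not> Sb \<subseteq> closure (Sb - closure (Fk k))"
  proof (rule ccontr)
    assume "\<not> ?thesis"
    then have dense: "\<And>T. T \<in> \<G> \<Longrightarrow> Sb \<subseteq> closure T" by (auto simp: \<G>_def)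
    have op: "openin (top_of_set Sb) T" if T: "T \<in> \<G>" for T
    proof -
      obtain k where "T = Sb - closure (Fk k)" using T unfolding \<G>_def by blast
      then have "T = Sb \<inter> (- closure (Fk k))" by auto
      then show ?thesis by (auto intro!: openin_open_Int)
    qed
    have "Sb \<subseteq> closure (\<Inter>\<G>)"
      by (rule Baire) (use op dense in \<open>auto simp: Sb_def \<G>_def\<close>)
    moreover have "x0 \<in> Sb" using \<open>r0 > 0\<close> by (simp add: Sb_def)
    ultimately have "\<Inter>\<G> \<noteq> {}" by auto
    then obtain w where w: "w \<in> \<Inter>\<G>" by blast
    have "w \<notin> closure (Fk (N w))" using w by (auto simp: \<G>_def)
    moreover have "w \<in> Fk (N w)" by (simp add: Fk_def)
    ultimately show False using closure_subset by blast
  qed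
  then obtain k y where yS: "y \<in> Sb" and ycl: "y \<notin> closure (Sb - closure (Fk k))" by blast
  obtain e where "e > 0" and e: "ball y e \<subseteq> - closure (Sb - closure (Fk k))"
    using ycl open_contains_ball[of "- closure (Sb - closure (Fk k))"] by auto
  have "y \<in> closure (ball x0 (r0/2))" using yS \<open>r0 > 0\<close> by (simp add: Sb_def)
  then obtain y2 where y2: "y2 \<in> ball x0 (r0/2)" "dist y2 y < e"
    using \<open>e > 0\<close> unfolding closure_approachable by blast
  have "open (ball y e \<inter> ball x0 (r0/2))" by auto
  moreover have "y2 \<in> ball y e \<inter> ball x0 (r0/2)" using y2 by (auto simp: dist_commute)
  ultimately obtain e2 where "e2 > 0" and e2: "ball y2 e2 \<subseteq> ball y e \<inter> ball x0 (r0/2)"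
    using open_contains_ball by blast
  define B where "B = ball y2 e2"
  have oB: "open B" by (simp add: B_def)
  have BSb: "B \<subseteq> Sb" using e2 by (auto simp: B_def Sb_def)
  have "ball x0 (r0/2) \<subseteq> ball x0 r0" using \<open>r0 > 0\<close> by (intro subset_ball) simp
  then have BK: "B \<subseteq> K" using e2 r0 unfolding B_def by blast
  have Bcl: "B \<subseteq> closure (Fk k)"
  proof
    fix x assume "x \<in> B"
    then have "x \<in> ball y e" "x \<in> Sb" using e2 BSb by (auto simp: B_def)
    then have "x \<notin> Sb - closure (Fk k)" using e closure_subset by blast
    then show "x \<in> closure (Fk k)" using \<open>x \<in> Sb\<close> by blast
  qed
  have finfib: "finite {z \<in> R. f z = w}" for w using fin by blast
  have LSC: "\<exists>\<epsilon>>0. \<forall>y\<in>ball w \<epsilon>. N w \<le> N y" if wS: "w \<notin> f ` S" for w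
  proof -
    obtain \<epsilon> G where "\<epsilon> > 0" and G1: "\<forall>z\<in>{z \<in> R. f z = w}. continuous_on (ball w \<epsilon>) (G z) \<and>
            (\<forall>y\<in>ball w \<epsilon>. G z y \<in> R \<and> f (G z y) = y)"
        and G2: "\<forall>z\<in>{z \<in> R. f z = w}. \<forall>z'\<in>{z \<in> R. f z = w}. z \<noteq> z' \<longrightarrow> (\<forall>y\<in>ball w \<epsilon>. G z y \<noteq> G z' y)"
      using SHEETS[OF wS] by blast
    have "N w \<le> N u" if uH: "u \<in> ball w \<epsilon>" for u
      unfolding N_def
    proof (rule card_inj_on_le[where f = "\<lambda>z. G z u"])
      show "inj_on (\<lambda>z. G z u) {z \<in> R. f z = w}"
      proof (rule inj_onI)
        fix a b assume "a \<in> {z \<in> R. f z = w}" "b \<in> {z \<in> R. f z = w}" "G a u = G b u"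
        then show "a = b" using G2 uH by blast
      qed
      show "(\<lambda>z. G z u) ` {z \<in> R. f z = w} \<subseteq> {z \<in> R. f z = u}" using G1 uH by auto
      show "finite {z \<in> R. f z = u}" by (rule finfib)
    qed
    then show ?thesis using \<open>\<epsilon> > 0\<close> by blast
  qed
  have LE: "N w \<le> k" if wB: "w \<in> B" and wS: "w \<notin> f ` S" for w
  proof (rule ccontr)
    assume "\<not> N w \<le> k"
    obtain \<epsilon> where "\<epsilon> > 0" and \<epsilon>: "\<forall>y\<in>ball w \<epsilon>. N w \<le> N y" using LSC[OF wS] by blast
    have "w \<in> closure (Fk k)" using Bcl wB by blast
    then obtain y where "y \<in> Fk k" "dist y w < \<epsilon>" using \<open>\<epsilon> > 0\<close> unfolding closure_approachable by blast
    then have "N y \<le> k" "N w \<le> N y" using \<epsilon> by (auto simp: Fk_def dist_commute)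
    then show False using \<open>\<not> N w \<le> k\<close> by simp
  qed
  have "B \<noteq> {}" using \<open>e2 > 0\<close> by (simp add: B_def)
  then have "\<not> B \<subseteq> f ` S"
    using NEG negligible_subset open_not_negligible[OF oB] by blast
  then have ne: "B - f ` S \<noteq> {}" by blast
  define Vals where "Vals = N ` (B - f ` S)"
  have finV: "finite Vals"
    by (rule finite_subset[of _ "{..k}"]) (use LE in \<open>auto simp: Vals_def\<close>)
  have neV: "Vals \<noteq> {}" using ne by (simp add: Vals_def)
  define m where "m = Max Vals"
  have "m \<in> Vals" using finV neV by (simp add: m_def)
  then obtain w1 where w1: "w1 \<in> B" "w1 \<notin> f ` S" "N w1 = m" by (auto simp: Vals_def)
  have maxm: "N y \<le> m" if "y \<in> B" "y \<notin> f ` S" for y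
    using finV that by (auto simp: m_def Vals_def intro!: Max_ge)
  define P1 where "P1 = {z \<in> R. f z = w1}"
  have finP1: "finite P1" using finfib by (simp add: P1_def)
  obtain \<epsilon>0 G where "\<epsilon>0 > 0" and G1: "\<forall>z\<in>P1. continuous_on (ball w1 \<epsilon>0) (G z) \<and>
            (\<forall>y\<in>ball w1 \<epsilon>0. G z y \<in> R \<and> f (G z y) = y)"
      and G2: "\<forall>z\<in>P1. \<forall>z'\<in>P1. z \<noteq> z' \<longrightarrow> (\<forall>y\<in>ball w1 \<epsilon>0. G z y \<noteq> G z' y)"
    using SHEETS[OF w1(2)] unfolding P1_def by blast
  obtain e3 where "e3 > 0" "ball w1 e3 \<subseteq> B" using oB w1(1) open_contains_ball by blast
  define \<epsilon> where "\<epsilon> = min \<epsilon>0 e3"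
  have "\<epsilon> > 0" using \<open>\<epsilon>0 > 0\<close> \<open>e3 > 0\<close> by (simp add: \<epsilon>_def)
  have bB: "ball w1 \<epsilon> \<subseteq> B" using \<open>ball w1 e3 \<subseteq> B\<close> by (auto simp: \<epsilon>_def)
  have b0: "ball w1 \<epsilon> \<subseteq> ball w1 \<epsilon>0" by (auto simp: \<epsilon>_def)
  have FIB: "{z \<in> R. f z = y} = (\<lambda>z. G z y) ` P1" if yH: "y \<in> ball w1 \<epsilon>" "y \<notin> f ` S" for y
  proof -
    have yb0: "y \<in> ball w1 \<epsilon>0" using yH b0 by blast
    have sub: "(\<lambda>z. G z y) ` P1 \<subseteq> {z \<in> R. f z = y}" using G1 yb0 by auto
    have inj: "inj_on (\<lambda>z. G z y) P1"
    proof (rule inj_onI)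
      fix a b assume "a \<in> P1" "b \<in> P1" "G a y = G b y"
      then show "a = b" using G2 yb0 by blast
    qed
    have "card ((\<lambda>z. G z y) ` P1) = m" using card_image[OF inj] w1(3) by (simp add: N_def P1_def)
    moreover have "card {z \<in> R. f z = y} \<le> m" using maxm[of y] yH bB by (auto simp: N_def)
    ultimately have "card {z \<in> R. f z = y} \<le> card ((\<lambda>z. G z y) ` P1)" by simp
    then have "card ((\<lambda>z. G z y) ` P1) = card {z \<in> R. f z = y}"
      using card_mono[OF finfib sub] by linarith
    then show ?thesis by (rule sym[OF card_subset_eq[OF finfib sub]])
  qed
  have "w1 \<in> K" using w1(1) BK by blast
  then have "w1 \<in> cluster_set R f" using w1(2) by (simp add: K_def)
  then obtain zs where zsR: "\<forall>n. zs n \<in> R"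
      and zslim: "(\<exists>p\<in>frontier R. zs \<longlonglongrightarrow> p) \<or> filterlim (\<lambda>n. norm (zs n)) at_top sequentially"
      and fzs: "(\<lambda>n. f (zs n)) \<longlonglongrightarrow> w1"
    unfolding cluster_set_def by blast
  have "\<forall>n. \<exists>z'. z' \<in> R \<and> dist z' (zs n) < inverse (real (Suc n)) \<and>
          dist (f z') (f (zs n)) < inverse (real (Suc n)) \<and> f z' \<notin> f ` S"
  proof
    fix n
    show "\<exists>z'. z' \<in> R \<and> dist z' (zs n) < inverse (real (Suc n)) \<and>
          dist (f z') (f (zs n)) < inverse (real (Suc n)) \<and> f z' \<notin> f ` S"
      by (rule PERT) (use zsR in auto)
  qed
  then have "\<exists>zs'. \<forall>n. zs' n \<in> R \<and> dist (zs' n) (zs n) < inverse (real (Suc n)) \<and>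
          dist (f (zs' n)) (f (zs n)) < inverse (real (Suc n)) \<and> f (zs' n) \<notin> f ` S"
    by (rule choice)
  then obtain zs' where zs'all: "\<forall>n. zs' n \<in> R \<and> dist (zs' n) (zs n) < inverse (real (Suc n)) \<and>
          dist (f (zs' n)) (f (zs n)) < inverse (real (Suc n)) \<and> f (zs' n) \<notin> f ` S"
    by blast
  have zs'R: "\<forall>n. zs' n \<in> R" and zsd: "\<forall>n. dist (zs' n) (zs n) < inverse (real (Suc n))"
      and fzsd: "\<forall>n. dist (f (zs' n)) (f (zs n)) < inverse (real (Suc n))"
      and zs'S: "\<forall>n. f (zs' n) \<notin> f ` S"
    using zs'all by auto
  define Kc where "Kc = (\<Union>z\<in>P1. (\<lambda>y. G z y) ` cball w1 (\<epsilon>/2))"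
  have cbsub: "cball w1 (\<epsilon>/2) \<subseteq> ball w1 \<epsilon>0" using \<open>\<epsilon> > 0\<close> b0 by auto
  have cKc: "compact Kc"
    unfolding Kc_def
  proof (rule compact_UN[OF finP1])
    fix z assume "z \<in> P1"
    then have "continuous_on (cball w1 (\<epsilon>/2)) (G z)" using G1 cbsub continuous_on_subset by blast
    then show "compact ((\<lambda>y. G z y) ` cball w1 (\<epsilon>/2))"
      by (intro compact_continuous_image) auto
  qed
  have KcR: "Kc \<subseteq> R" using G1 cbsub by (auto simp: Kc_def)
  have ev1: "eventually (\<lambda>n. dist (f (zs n)) w1 < \<epsilon>/4) sequentially"
    using tendstoD[OF fzs, of "\<epsilon>/4"] \<open>\<epsilon> > 0\<close> by simp
  have inv0: "(\<lambda>n. inverse (real (Suc n))) \<longlonglongrightarrow> 0" by (rule LIMSEQ_inverse_real_of_nat)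
  have ev2: "eventually (\<lambda>n. inverse (real (Suc n)) < \<epsilon>/4) sequentially"
    using order_tendstoD(2)[OF inv0, of "\<epsilon>/4"] \<open>\<epsilon> > 0\<close> by simp
  have evK: "eventually (\<lambda>n. zs' n \<in> Kc) sequentially"
    using ev1 ev2
  proof eventually_elim
    case (elim n)
    have "dist (f (zs' n)) w1 \<le> dist (f (zs' n)) (f (zs n)) + dist (f (zs n)) w1"
      by (rule dist_triangle)
    moreover have "dist (f (zs' n)) (f (zs n)) < \<epsilon>/4" using fzsd elim(2) less_trans by blast
    ultimately have d: "dist (f (zs' n)) w1 < \<epsilon>/2" using elim(1) by linarith
    define y where "y = f (zs' n)"
    have yb: "y \<in> ball w1 \<epsilon>" using d \<open>\<epsilon> > 0\<close> by (simp add: y_def dist_commute)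
    have "zs' n \<in> {z \<in> R. f z = y}" using zs'R by (simp add: y_def)
    moreover have "y \<notin> f ` S" using zs'S by (simp add: y_def)
    ultimately have "zs' n \<in> (\<lambda>z. G z y) ` P1" using FIB[OF yb] by blast
    moreover have "y \<in> cball w1 (\<epsilon>/2)" using d by (simp add: y_def dist_commute)
    ultimately show ?case unfolding Kc_def by blast
  qed
  from zslim show False
  proof
    assume "\<exists>p\<in>frontier R. zs \<longlonglongrightarrow> p"
    then obtain p where p: "p \<in> frontier R" "zs \<longlonglongrightarrow> p" by blast
    have "(\<lambda>n. zs' n - zs n) \<longlonglongrightarrow> 0"
    proof (rule Lim_null_comparison[OF _ inv0])
      show "eventually (\<lambda>n. norm (zs' n - zs n) \<le> inverse (real (Suc n))) sequentially"
        using zsd by (auto simp: dist_norm less_imp_le)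
    qed
    then have "(\<lambda>n. zs n + (zs' n - zs n)) \<longlonglongrightarrow> p + 0" by (intro tendsto_add p(2))
    then have "zs' \<longlonglongrightarrow> p" by simp
    then have "p \<in> Kc"
      using Lim_in_closed_set[OF compact_imp_closed[OF cKc] evK] by simp
    then have "p \<in> R" using KcR by blast
    moreover have "p \<notin> R" using p(1) openR by (simp add: frontier_def interior_open)
    ultimately show False by blast
  next
    assume lim: "filterlim (\<lambda>n. norm (zs n)) at_top sequentially"
    obtain M where M: "\<forall>x\<in>Kc. norm x \<le> M"
      using compact_imp_bounded[OF cKc] by (auto simp: bounded_iff)
    have "eventually (\<lambda>n. M + 2 \<le> norm (zs n)) sequentially"
      using lim by (simp add: filterlim_at_top)
    then have "eventually (\<lambda>n. False) sequentially"
      using evK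
    proof eventually_elim
      case (elim n)
      have "inverse (real (Suc n)) \<le> 1" by (simp add: inverse_le_1_iff)
      then have "dist (zs' n) (zs n) < 1" using zsd by (meson less_le_trans)
      then have "norm (zs n) \<le> norm (zs' n) + 1"
        using norm_triangle_ineq2[of "zs n" "zs' n"] by (simp add: dist_norm norm_minus_commute)
      moreover have "norm (zs' n) \<le> M" using M elim by blast
      ultimately show ?case using elim by simp
    qed
    then show False by simp
  qed
qed

end


theorem corollary4p10:
  fixes R :: "complex set" and f :: "complex \<Rightarrow> complex"
  assumes "open R" and "harmonic_on R f"
    and "\<forall>w. finite {z \<in> R. f z = w}"
  shows "interior (f ` singset R f \<union> cluster_set R f) = {}"
proof -
  have h1: "\<forall>z\<in>R. f differentiable (at z)"
    and h2: "\<forall>z\<in>R. dx f differentiable (at z) \<and> dy f differentiable (at z)"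
    using assms(2) by (auto simp: harmonic_on_def)
  have der: "(f has_derivative Dm f z) (at z)" if "z \<in> R" for z
    using h1 that has_derivative_Dm by blast
  have cdx: "continuous_on R (dx f)"
    by (rule continuous_at_imp_continuous_on) (use h2 differentiable_imp_continuous_within in blast)
  have cdy: "continuous_on R (dy f)"
    by (rule continuous_at_imp_continuous_on) (use h2 differentiable_imp_continuous_within in blast)
  interpret hsetup R f
    by unfold_locales (use assms(1,3) der cdx cdy in auto)
  show ?thesis using MAIN by (simp add: S_def)
qed

end
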